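(* Let $M$ be a magma satisfying the identities $(xy)z = xx$ and $x(yz) = xx$ for all $x,y,z\in M$. Then $M$ additionally satisfies $xx = yy$ for all $x,y\in M$ if and only if $M$ avoids the magma $2_{LZ}$ on $\{0,1\}$ with Cayley table \[ \begin{array}{c|cc} 2_{LZ} & 0 & 1 \\ \hline 0 & 0 & 0 \\ 1 & 1 & 1 \end{array} \] (i.e. $xy=x$ for all $x,y$).
   Context: A magma is a nonempty set with a binary operation, written by juxtaposition. A magma $M$ avoids a magma $F$ if no submagma of $M$ (nonempty subset closed under the operation, with the restricted operation) is isomorphic to $F$. *)

theory Defs
  imports Main
begin

definition magma :: "'a set \<Rightarrow> ('a \<Rightarrow> 'a \<Rightarrow> 'a) \<Rightarrow> bool" where
  "magma M f \<longleftrightarrow> M \<noteq> {} \<and> (\<forall>x\<in>M. \<forall>y\<in>M. f x y \<in> M)"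

definition submagma :: "'a set \<Rightarrow> 'a set \<Rightarrow> ('a \<Rightarrow> 'a \<Rightarrow> 'a) \<Rightarrow> bool" where
  "submagma S M f \<longleftrightarrow> S \<noteq> {} \<and> S \<subseteq> M \<and> (\<forall>x\<in>S. \<forall>y\<in>S. f x y \<in> S)"

definition magma_iso :: "('a \<Rightarrow> 'b) \<Rightarrow> 'a set \<Rightarrow> ('a \<Rightarrow> 'a \<Rightarrow> 'a) \<Rightarrow> 'b set \<Rightarrow> ('b \<Rightarrow> 'b \<Rightarrow> 'b) \<Rightarrow> bool" where
  "magma_iso h S f T g \<longleftrightarrow> bij_betw h S T \<and> (\<forall>x\<in>S. \<forall>y\<in>S. h (f x y) = g (h x) (h y))"

definition avoids :: "'a set \<Rightarrow> ('a \<Rightarrow> 'a \<Rightarrow> 'a) \<Rightarrow> 'b set \<Rightarrow> ('b \<Rightarrow> 'b \<Rightarrow> 'b) \<Rightarrow> bool" where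
  "avoids M f F g \<longleftrightarrow> \<not> (\<exists>S h. submagma S M f \<and> magma_iso h S f F g)"

definition LZ2_carrier :: "nat set" where "LZ2_carrier = {0, 1}"
definition LZ2_op :: "nat \<Rightarrow> nat \<Rightarrow> nat" where "LZ2_op x y = x"

end

theory Submission
  imports Defs
begin

theorem mainTheorem1:
  fixes M :: "'a set" and f :: "'a \<Rightarrow> 'a \<Rightarrow> 'a"
  assumes "magma M f"
    and "\<forall>x\<in>M. \<forall>y\<in>M. \<forall>z\<in>M. f (f x y) z = f x x"
    and "\<forall>x\<in>M. \<forall>y\<in>M. \<forall>z\<in>M. f x (f y z) = f x x"
  shows "(\<forall>x\<in>M. \<forall>y\<in>M. f x x = f y y) \<longleftrightarrow> avoids M f LZ2_carrier LZ2_op"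
proof
  assume c: "\<forall>x\<in>M. \<forall>y\<in>M. f x x = f y y"
  show "avoids M f LZ2_carrier LZ2_op"
    unfolding avoids_def
  proof
    assume "\<exists>S h. submagma S M f \<and> magma_iso h S f LZ2_carrier LZ2_op"
    then obtain S h where S: "submagma S M f" and h: "magma_iso h S f LZ2_carrier LZ2_op" by blast
    have bij: "bij_betw h S {0,1}" and hom: "\<forall>x\<in>S. \<forall>y\<in>S. h (f x y) = h x"
      using h by (auto simp: magma_iso_def LZ2_carrier_def LZ2_op_def)
    obtain a where a: "a \<in> S" "h a = 0" using bij by (metis bij_betw_def imageE insertI1)
    obtain b where b: "b \<in> S" "h b = 1" using bij by (metis bij_betw_def imageE insert_iff)
    have inj: "inj_on h S" using bij by (simp add: bij_betw_def)
    have sub: "S \<subseteq> M" and cl: "\<forall>x\<in>S. \<forall>y\<in>S. f x y \<in> S" using S by (auto simp: submagma_def)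
    have "f a a = a"
    proof (rule inj_onD[OF inj])
      show "h (f a a) = h a" using hom a by blast
      show "f a a \<in> S" using cl a by blast
    qed (use a in blast)
    moreover have "f b b = b"
    proof (rule inj_onD[OF inj])
      show "h (f b b) = h b" using hom b by blast
      show "f b b \<in> S" using cl b by blast
    qed (use b in blast)
    moreover have "f a a = f b b" using c a b sub by blast
    ultimately have "a = b" by metis
    then have "h a = h b" by simp
    then show False using a(2) b(2) by simp
  qed
next
  assume av: "avoids M f LZ2_carrier LZ2_op"
  show "\<forall>x\<in>M. \<forall>y\<in>M. f x x = f y y"
  proof (rule ccontr)
    assume "\<not> ?thesis"
    then obtain x y where xy: "x \<in> M" "y \<in> M" "f x x \<noteq> f y y" by blast
    define a where "a = f x x"
    define b where "b = f y y"
    have aM: "a \<in> M" and bM: "b \<in> M" using assms(1) xy by (auto simp: magma_def a_def b_def)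
    have ab: "a \<noteq> b" using xy a_def b_def by simp
    have A: "\<And>z. z \<in> M \<Longrightarrow> f a z = a" unfolding a_def using assms(2) xy(1) by blast
    have B: "\<And>z. z \<in> M \<Longrightarrow> f b z = b" unfolding b_def using assms(2) xy(2) by blast
    have "f a a = a" using A aM by blast
    moreover have "f b b = b" using B bM by blast
    moreover have "f a b = a" using A bM by blast
    moreover have "f b a = b" using B aM by blast
    ultimately have ops: "\<forall>u\<in>{a,b}. \<forall>v\<in>{a,b}. f u v = u" by auto
    define h where "h = (\<lambda>z. if z = a then (0::nat) else 1)"
    have "submagma {a,b} M f" using aM bM ops by (auto simp: submagma_def)
    moreover have "magma_iso h {a,b} f LZ2_carrier LZ2_op"
    proof -
      have "inj_on h {a,b}" using ab unfolding inj_on_def h_def by auto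
      moreover have "h ` {a,b} = {0,1}" using ab unfolding h_def by auto
      moreover have "\<forall>u\<in>{a,b}. \<forall>v\<in>{a,b}. h (f u v) = LZ2_op (h u) (h v)"
        using ops unfolding LZ2_op_def by simp
      ultimately show ?thesis unfolding magma_iso_def LZ2_carrier_def bij_betw_def by blast
    qed
    ultimately show False using av unfolding avoids_def by blast
  qed
qed

end
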